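(* Assume the setting in the context, with a decomposition of $\mathcal X$ over $A$, $g\in\mathcal G_s$ and $\alpha\in(0,1)$. Let $\mathcal V$ be any subspace of $\mathcal U$ with $\mathcal U=\big(\bigoplus_{i\in\mathcal I}\mathcal E_i\big)\oplus\mathcal V$. If $\{(A,B|_{\mathcal E_i},g,\alpha)\}_{i\in\mathcal I}$ is a decomposition (Definition 1) of $(A,B,g,\alpha)$, then $A(\mathcal X)\cap B(\mathcal V)=\{0\}$.
   Context: Let $\mathcal F$ be a field and $\mathcal X,\mathcal U$ finite-dimensional vector spaces over $\mathcal F$. Let $A:\mathcal X\to\mathcal X$ and $B:\mathcal U\to\mathcal X$ be linear maps with $B$ injective, and consider $x_{t+1}=Ax_t+Bu_t$ and a cost $g:\mathcal X\to\mathbb R_{\ge0}$ with $g(x)=0\iff x=0$. Standing assumption: all minima appearing below are attained. Infinite-horizon problem $(A,B,g,\alpha)$: policies $\pi(x_0)=(\pi_t(x_0))_{t\in\mathbb Z_+}\in\mathcal U^{\mathbb Z_+}$, cost $J(x_0,\pi)=\sum_{t\ge0}\alpha^tg(x_t)$ with $x_{t+1}=Ax_t+B\pi_t(x_0)$; $J^*(x_0)=\min_\pi J(x_0,\pi)$, which satisfies the Bellman equation $J^*(x)=g(x)+\alpha\min_{u}J^*(Ax+Bu)$; minimizing policies are optimal. A decomposition of $\mathcal X$ over $A$ is a direct sum $\mathcal X=\mathcal X_1\oplus\cdots\oplus\mathcal X_r$ with $r>1$ and $A\mathcal X_i\subseteq\mathcal X_i$, $i\in\mathcal I=\{1,\dots,r\}$;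 $\rho_i:\mathcal X\to\mathcal X_i$ is the projection along the other summands. $\mathcal G_s$ is the set of $h:\mathcal X\to\mathbb R_{\ge0}$ with $h(x)=\sum_i h(\rho_i(x))$ for all $x$. $\mathcal E_i=\{u\in\mathcal U:Bu\in\mathcal X_i\}$ (the sum of the $\mathcal E_i$ is direct since $B$ is injective). Subproblem $(A,B|_{\mathcal E_i},g,\alpha)$: same problem for $x_{i,t+1}=Ax_{i,t}+B\bar u_{i,t}$ with states in $\mathcal X_i$ and inputs in $\mathcal E_i$; optimal cost $\bar J_i^*$, optimal policies $\bar\pi_i^*$. Definition 1: the family is a decomposition of $(A,B,g,\alpha)$ if for every $x$: $J^*(x)=\sum_i\bar J_i^*(\rho_i(x))$, and for every choice of optimal policies $\bar\pi_i^*(\rho_i(x))$ there is an optimal policy $\pi^*(x)$ with $\pi^*(x)=\sum_i\bar\pi_i^*(\rho_i(x))$. *)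

theory Defs
  imports Main "HOL-Library.Extended_Nonnegative_Real"
begin

definition is_direct_sum :: "('f::field \<Rightarrow> 'v::ab_group_add \<Rightarrow> 'v) \<Rightarrow> nat set \<Rightarrow> (nat \<Rightarrow> 'v set) \<Rightarrow> bool" where
  "is_direct_sum s I W \<longleftrightarrow> finite I \<and> (\<forall>i\<in>I. module.subspace s (W i)) \<and>
     (\<forall>v. \<exists>!w. (\<forall>i. w i \<in> (if i \<in> I then W i else {0})) \<and> v = sum w I)"

definition proj :: "nat set \<Rightarrow> (nat \<Rightarrow> 'v::ab_group_add set) \<Rightarrow> nat \<Rightarrow> 'v \<Rightarrow> 'v" where
  "proj I W i v = (THE w. (\<forall>j. w j \<in> (if j \<in> I then W j else {0})) \<and> v = sum w I) i"

fun traj :: "('x::ab_group_add \<Rightarrow> 'x) \<Rightarrow> ('u \<Rightarrow> 'x) \<Rightarrow> 'x \<Rightarrow> (nat \<Rightarrow> 'u) \<Rightarrow> nat \<Rightarrow> 'x" where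
  "traj A B x0 u 0 = x0"
| "traj A B x0 u (Suc t) = A (traj A B x0 u t) + B (u t)"

definition cost :: "('x::ab_group_add \<Rightarrow> 'x) \<Rightarrow> ('u \<Rightarrow> 'x) \<Rightarrow> ('x \<Rightarrow> real) \<Rightarrow> real \<Rightarrow> 'x \<Rightarrow> (nat \<Rightarrow> 'u) \<Rightarrow> ennreal" where
  "cost A B g \<alpha> x0 u = (\<Sum>t. ennreal (\<alpha> ^ t * g (traj A B x0 u t)))"

definition opt_cost :: "('x::ab_group_add \<Rightarrow> 'x) \<Rightarrow> ('u \<Rightarrow> 'x) \<Rightarrow> ('x \<Rightarrow> real) \<Rightarrow> real \<Rightarrow> 'u set \<Rightarrow> 'x \<Rightarrow> ennreal" where
  "opt_cost A B g \<alpha> Us x0 = (INF u \<in> {u. \<forall>t. u t \<in> Us}. cost A B g \<alpha> x0 u)"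

definition is_optimal :: "('x::ab_group_add \<Rightarrow> 'x) \<Rightarrow> ('u \<Rightarrow> 'x) \<Rightarrow> ('x \<Rightarrow> real) \<Rightarrow> real \<Rightarrow> 'u set \<Rightarrow> 'x \<Rightarrow> (nat \<Rightarrow> 'u) \<Rightarrow> bool" where
  "is_optimal A B g \<alpha> Us x0 u \<longleftrightarrow> (\<forall>t. u t \<in> Us) \<and> cost A B g \<alpha> x0 u = opt_cost A B g \<alpha> Us x0"

definition inputs_into :: "('u \<Rightarrow> 'x) \<Rightarrow> 'x set \<Rightarrow> 'u set" where
  "inputs_into B Xi = {u. B u \<in> Xi}"

definition is_problem_decomposition :: "('x::ab_group_add \<Rightarrow> 'x) \<Rightarrow> ('u::comm_monoid_add \<Rightarrow> 'x) \<Rightarrow> ('x \<Rightarrow> real) \<Rightarrow> real \<Rightarrow> nat set \<Rightarrow> (nat \<Rightarrow> 'x set) \<Rightarrow> bool" where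
  "is_problem_decomposition A B g \<alpha> I Xs \<longleftrightarrow>
     (\<forall>x. opt_cost A B g \<alpha> UNIV x = (\<Sum>i\<in>I. opt_cost A B g \<alpha> (inputs_into B (Xs i)) (proj I Xs i x))
        \<and> (\<forall>ub. (\<forall>i\<in>I. is_optimal A B g \<alpha> (inputs_into B (Xs i)) (proj I Xs i x) (ub i))
               \<longrightarrow> is_optimal A B g \<alpha> UNIV x (\<lambda>t. \<Sum>i\<in>I. ub i t)))"

end

theory Submission
  imports Defs
begin

theorem proposition8:
  fixes sX :: "'f::field \<Rightarrow> 'x::ab_group_add \<Rightarrow> 'x"
    and sU :: "'f \<Rightarrow> 'u::ab_group_add \<Rightarrow> 'u"
    and A :: "'x \<Rightarrow> 'x" and B :: "'u \<Rightarrow> 'x"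
    and g :: "'x \<Rightarrow> real" and \<alpha> :: real
    and r :: nat and Xs :: "nat \<Rightarrow> 'x set" and V :: "'u set"
  assumes fdX: "\<exists>BX. finite_dimensional_vector_space sX BX"
    and fdU: "\<exists>BU. finite_dimensional_vector_space sU BU"
    and linA: "Vector_Spaces.linear sX sX A"
    and linB: "Vector_Spaces.linear sU sX B"
    and injB: "inj B"
    and g_nonneg: "\<forall>x. g x \<ge> 0"
    and g_zero: "\<forall>x. g x = 0 \<longleftrightarrow> x = 0"
    and r_gt: "r > 1"
    and dsX: "is_direct_sum sX {1..r} Xs"
    and invA: "\<forall>i\<in>{1..r}. A ` Xs i \<subseteq> Xs i"
    and g_sep: "\<forall>x. g x = (\<Sum>i\<in>{1..r}. g (proj {1..r} Xs i x))"
    and alpha: "0 < \<alpha>" "\<alpha> < 1"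
    and attained: "\<forall>x. \<exists>u. is_optimal A B g \<alpha> UNIV x u"
    and attained_sub: "\<forall>i\<in>{1..r}. \<forall>z\<in>Xs i. \<exists>u. is_optimal A B g \<alpha> (inputs_into B (Xs i)) z u"
    and V_sub: "module.subspace sU V"
    and dsU: "is_direct_sum sU {0..r} (\<lambda>i. if i = 0 then V else inputs_into B (Xs i))"
    and decomp: "is_problem_decomposition A B g \<alpha> {1..r} Xs"
  shows "range A \<inter> B ` V = {0}"
proof -
  have hA: "module_hom sX sX A" using linA module_hom_iff_linear by blast
  have hB: "module_hom sU sX B" using linB module_hom_iff_linear by blast
  have A0: "A 0 = 0" using module_hom.zero[OF hA] .
  have B0: "B 0 = 0" using module_hom.zero[OF hB] .
  have Badd: "\<And>a b. B (a + b) = B a + B b" using module_hom.add[OF hB] .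
  have Bneg: "\<And>a. B (- a) = - B a" using module_hom.neg[OF hB] .
  have modU: "module sU" using fdU finite_dimensional_vector_space.axioms(1) module_iff_vector_space by blast
  have modX: "module sX" using fdX finite_dimensional_vector_space.axioms(1) module_iff_vector_space by blast
  have V0: "0 \<in> V" using module.subspace_0[OF modU V_sub] .
  have X0: "\<And>i. i \<in> {1..r} \<Longrightarrow> 0 \<in> Xs i"
    using dsX module.subspace_0[OF modX] unfolding is_direct_sum_def by blast
  have "y = 0" if y1: "y = A x0" and y2: "y = B v" and vV: "v \<in> V" for y x0 v
  proof -
    define us :: "nat \<Rightarrow> 'u" where "us = (\<lambda>t. if t = 0 then - v else 0)"
    have tr: "traj A B x0 us (Suc t) = 0" for t
    proof (induction t)
      case 0
      then show ?case using y1 y2 by (simp add: us_def Bneg)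
    next
      case (Suc t)
      then show ?case by (simp add: us_def A0 B0)
    qed
    have g0: "g 0 = 0" using g_zero by blast
    have "cost A B g \<alpha> x0 us = (\<Sum>t\<in>{0}. ennreal (\<alpha> ^ t * g (traj A B x0 us t)))"
      unfolding cost_def
    proof (rule suminf_finite)
      fix n :: nat assume "n \<notin> {0}"
      then obtain m where "n = Suc m" by (cases n) auto
      then show "ennreal (\<alpha> ^ n * g (traj A B x0 us n)) = 0" using tr g0 by simp
    qed simp
    hence costus: "cost A B g \<alpha> x0 us = ennreal (g x0)" by simp
    have optle: "opt_cost A B g \<alpha> UNIV x0 \<le> ennreal (g x0)"
      unfolding opt_cost_def using costus INF_lower[of us "{u. \<forall>t. u t \<in> UNIV}" "cost A B g \<alpha> x0"] by simp
    have pin: "\<forall>i\<in>{1..r}. proj {1..r} Xs i x0 \<in> Xs i"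
    proof
      fix i assume i: "i \<in> {1..r}"
      have ex: "\<exists>!w. (\<forall>j. w j \<in> (if j \<in> {1..r} then Xs j else {0})) \<and> x0 = sum w {1..r}"
        using dsX unfolding is_direct_sum_def by blast
      have "(\<forall>j. (THE w. (\<forall>j. w j \<in> (if j \<in> {1..r} then Xs j else {0})) \<and> x0 = sum w {1..r}) j
             \<in> (if j \<in> {1..r} then Xs j else {0}))"
        using theI'[OF ex] by blast
      then show "proj {1..r} Xs i x0 \<in> Xs i" unfolding proj_def using i by (metis (no_types, lifting))
    qed
    have "\<forall>i\<in>{1..r}. \<exists>u. is_optimal A B g \<alpha> (inputs_into B (Xs i)) (proj {1..r} Xs i x0) u"
      using attained_sub pin by blast
    then obtain ub where ub: "\<forall>i\<in>{1..r}. is_optimal A B g \<alpha> (inputs_into B (Xs i)) (proj {1..r} Xs i x0) (ub i)"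
      by metis
    define u where "u = (\<lambda>t. \<Sum>i\<in>{1..r}. ub i t)"
    have opt: "is_optimal A B g \<alpha> UNIV x0 u"
      using decomp ub unfolding is_problem_decomposition_def u_def by blast
    have costu: "cost A B g \<alpha> x0 u \<le> ennreal (g x0)"
      using opt optle unfolding is_optimal_def by simp
    define f where "f = (\<lambda>t. ennreal (\<alpha> ^ t * g (traj A B x0 u t)))"
    have "sum f {..<2} \<le> suminf f"
      by (rule sum_le_suminf) (auto intro: summableI)
    hence "f 0 + f 1 \<le> ennreal (g x0)" using costu unfolding cost_def f_def[symmetric]
      by (simp add: numeral_2_eq_2)
    moreover have "f 0 = ennreal (g x0)" by (simp add: f_def)
    moreover have "0 \<le> \<alpha> * g (traj A B x0 u 1)" using alpha g_nonneg by simp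
    ultimately have "g x0 + \<alpha> * g (traj A B x0 u 1) \<le> g x0"
      using g_nonneg unfolding f_def
      by (metis ennreal_le_iff ennreal_plus power_one_right)
    hence "\<alpha> * g (traj A B x0 u 1) \<le> 0" by simp
    hence "g (traj A B x0 u 1) = 0" using alpha g_nonneg
      by (meson antisym mult_le_0_iff not_less)
    hence "traj A B x0 u 1 = 0" using g_zero by blast
    hence "B v + B (u 0) = 0" using y1 y2 by simp
    hence "B (v + u 0) = B 0" using Badd B0 by simp
    hence vu: "v + u 0 = 0" using injB by (meson injD)
    define W where "W = (\<lambda>i. if i = 0 then V else inputs_into B (Xs i))"
    have ex: "\<exists>!w. (\<forall>i. w i \<in> (if i \<in> {0..r} then W i else {0})) \<and> 0 = sum w {0..r}"
      using dsU unfolding is_direct_sum_def W_def by blast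
    define w' where "w' = (\<lambda>j. if j = 0 then v else if j \<in> {1..r} then ub j 0 else 0)"
    have m1: "\<forall>i. w' i \<in> (if i \<in> {0..r} then W i else {0})"
    proof
      fix i show "w' i \<in> (if i \<in> {0..r} then W i else {0})"
      proof (cases "i = 0")
        case True then show ?thesis using vV by (simp add: w'_def W_def)
      next
        case False
        show ?thesis
        proof (cases "i \<in> {1..r}")
          case True
          then have "ub i 0 \<in> inputs_into B (Xs i)" using ub unfolding is_optimal_def by blast
          then show ?thesis using True False by (simp add: w'_def W_def)
        next
          case F2: False
          then show ?thesis using False by (simp add: w'_def)
        qed
      qed
    qed
    have "sum w' {0..r} = w' 0 + sum w' {1..r}"
      by (simp add: sum.atLeast_Suc_atMost)
    also have "sum w' {1..r} = u 0" unfolding u_def w'_def by (rule sum.cong) auto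
    finally have s1: "0 = sum w' {0..r}" using vu by (simp add: w'_def)
    have m2: "\<forall>i. (\<lambda>_. 0::'u) i \<in> (if i \<in> {0..r} then W i else {0})"
    proof
      fix i show "(\<lambda>_. 0::'u) i \<in> (if i \<in> {0..r} then W i else {0})"
        using V0 X0 B0 by (auto simp: W_def inputs_into_def)
    qed
    have "w' = (\<lambda>_. 0)" using ex m1 s1 m2 by auto
    hence "v = 0" unfolding w'_def by (metis)
    then show "y = 0" using y2 B0 by simp
  qed
  moreover have "0 \<in> range A \<inter> B ` V" using A0 B0 V0 by (metis IntI image_eqI rangeI)
  ultimately show ?thesis by blast
qed

end
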